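(* For even $m\ge 10$, let $T_m:=K_1\vee\bigl(K_4\cup (m-10)K_1\bigr)$, i.e. the graph consisting of a vertex $u^*$ adjacent to all vertices of a disjoint union of a $K_4$ and $m-10$ isolated vertices (so $T_m$ has $m$ edges). Then $T_m$ is $H(4,3)$-free, $\rho(T_m)>\rho'(m)$ for $m\in\{10,12,14,16\}$, and $\rho(T_m)<\rho'(m)$ for every even $m\ge 18$.
   Context: All graphs are finite, simple and undirected; $\rho(G)$ denotes the adjacency spectral radius of $G$. $H(4,3)$ is the graph obtained from a $4$-cycle and a triangle by identifying one vertex of the $4$-cycle with one vertex of the triangle; $H(4,3)$-free means containing no subgraph isomorphic to $H(4,3)$. $G_1\vee G_2$ denotes the join (disjoint union plus all edges between the two parts), and $\cup$ denotes disjoint union. For even $m$, $\rho'(m)$ is the largest real root of $p_m(x)=x^4-mx^2-(m-2)x+\frac{m}{2}-1$. *)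

theory Defs
  imports Complex_Main
begin

text \<open>A finite simple graph is given by a finite vertex set V and a symmetric,
irreflexive adjacency relation (only its restriction to V matters).\<close>

record 'a sgraph =
  verts :: "'a set"
  adj :: "'a \<Rightarrow> 'a \<Rightarrow> bool"

definition simple_graph :: "'a sgraph \<Rightarrow> bool" where
  "simple_graph G \<longleftrightarrow> finite (verts G) \<and>
     (\<forall>u v. adj G u v \<longrightarrow> adj G v u) \<and> (\<forall>v. \<not> adj G v v) \<and>
     (\<forall>u v. adj G u v \<longrightarrow> u \<in> verts G \<and> v \<in> verts G)"

definition adj_eigenvalue :: "'a sgraph \<Rightarrow> real \<Rightarrow> bool" where
  "adj_eigenvalue G lam \<longleftrightarrow> (\<exists>x :: 'a \<Rightarrow> real.
     (\<exists>v\<in>verts G. x v \<noteq> 0) \<and>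
     (\<forall>v\<in>verts G. (\<Sum>w\<in>{w\<in>verts G. adj G v w}. x w) = lam * x v))"

text \<open>Adjacency spectral radius: the largest absolute value of an eigenvalue of A(G)
(A(G) is real symmetric, so all its eigenvalues are real).\<close>
definition spectral_radius :: "'a sgraph \<Rightarrow> real" where
  "spectral_radius G = Max {\<bar>lam\<bar> | lam. adj_eigenvalue G lam}"

definition contains_subgraph :: "'b sgraph \<Rightarrow> 'a sgraph \<Rightarrow> bool" where
  "contains_subgraph H G \<longleftrightarrow> (\<exists>f. inj_on f (verts H) \<and> f ` verts H \<subseteq> verts G \<and>
     (\<forall>u\<in>verts H. \<forall>v\<in>verts H. adj H u v \<longrightarrow> adj G (f u) (f v)))"

text \<open>H(4,3): the 4-cycle 0-1-2-3-0 and the triangle 0-4-5-0 sharing vertex 0.\<close>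
definition H43 :: "nat sgraph" where
  "H43 = \<lparr> verts = {0..<6},
     adj = (\<lambda>u v. {u, v} \<in> {{0,1},{1,2},{2,3},{3,0},{0,4},{4,5},{5,0}}) \<rparr>"

definition H43_free :: "'a sgraph \<Rightarrow> bool" where
  "H43_free G \<longleftrightarrow> \<not> contains_subgraph H43 G"

text \<open>T_m = K_1 join (K_4 union (m-10) K_1): vertex 0 is u*, vertices 1..4 form K_4,
vertices 5,...,m-6 are the m-10 isolated vertices of K_4 union (m-10)K_1.\<close>
definition T :: "nat \<Rightarrow> nat sgraph" where
  "T m = \<lparr> verts = {0..<m-5},
     adj = (\<lambda>u v. u \<in> {0..<m-5} \<and> v \<in> {0..<m-5} \<and> u \<noteq> v \<and>
                 (u = 0 \<or> v = 0 \<or> (u \<in> {1..4} \<and> v \<in> {1..4}))) \<rparr>"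

definition p_poly :: "nat \<Rightarrow> real \<Rightarrow> real" where
  "p_poly m x = x^4 - real m * x^2 - (real m - 2) * x + real m / 2 - 1"

definition rho' :: "nat \<Rightarrow> real" where
  "rho' m = Max {x. p_poly m x = 0}"

end

theory Submission
  imports Defs "HOL-Computational_Algebra.Polynomial"
begin

definition qq :: "real \<Rightarrow> real \<Rightarrow> real" where
  "qq k x = x^3 - 3*x^2 - (k+4)*x + 3*k"

lemma cubic_pos:
  fixes a b d c x :: real
  assumes "c \<le> x" "c^3 + a*c^2 + b*c + d > 0" "3*c^2 + 2*a*c + b \<ge> 0" "3*c + a \<ge> 0"
  shows "x^3 + a*x^2 + b*x + d > 0"
proof -
  define t where "t = x - c"
  have t: "t \<ge> 0" using assms(1) by (simp add: t_def)
  have e: "x^3 + a*x^2 + b*x + d = (c^3 + a*c^2 + b*c + d) + (3*c^2 + 2*a*c + b)*t + (3*c + a)*t^2 + t^3"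
    unfolding t_def by (simp add: power2_eq_square power3_eq_cube algebra_simps)
  have "(3*c^2 + 2*a*c + b)*t \<ge> 0" using assms t by simp
  moreover have "(3*c + a)*t^2 \<ge> 0" using assms t by simp
  moreover have "t^3 \<ge> 0" using t by simp
  ultimately show ?thesis using e assms(2) by linarith
qed

lemma quart_pos:
  fixes b e d c x :: real
  assumes "c \<le> x" "c \<ge> 0" "c^4 + b*c^2 + e*c + d > 0" "4*c^3 + 2*b*c + e \<ge> 0" "6*c^2 + b \<ge> 0"
  shows "x^4 + b*x^2 + e*x + d > 0"
proof -
  define t where "t = x - c"
  have t: "t \<ge> 0" using assms(1) by (simp add: t_def)
  have eq: "x^4 + b*x^2 + e*x + d = (c^4 + b*c^2 + e*c + d) + (4*c^3 + 2*b*c + e)*t + (6*c^2 + b)*t^2 + 4*c*t^3 + t^4"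
    unfolding t_def by (simp add: power2_eq_square power3_eq_cube power4_eq_xxxx algebra_simps)
  have "(4*c^3 + 2*b*c + e)*t \<ge> 0" using assms t by simp
  moreover have "(6*c^2 + b)*t^2 \<ge> 0" using assms t by simp
  moreover have "4*c*t^3 \<ge> 0" using assms t by simp
  moreover have "t^4 \<ge> 0" using t by simp
  ultimately show ?thesis using eq assms(3) by linarith
qed

lemma eig_roots:
  assumes m: "m \<ge> 10" and ev: "adj_eigenvalue (T m) lam"
  shows "lam = 0 \<or> lam = -1 \<or> qq (real m - 10) lam = 0"
proof (rule ccontr)
  assume H: "\<not> ?thesis"
  hence l0: "lam \<noteq> 0" and l1: "lam \<noteq> -1" and lq: "qq (real m - 10) lam \<noteq> 0" by auto
  obtain x where nz: "\<exists>v\<in>verts (T m). x v \<noteq> 0"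
    and eq: "\<forall>v\<in>verts (T m). (\<Sum>w\<in>{w\<in>verts (T m). adj (T m) v w}. x w) = lam * x v"
    using ev unfolding adj_eigenvalue_def by blast
  have V: "verts (T m) = {0..<m-5}" by (simp add: T_def)
  define L where "L = sum x {5..<m-5}"
  define s where "s = x 1 + x 2 + x 3 + x 4"
  define k where "k = real m - 10"
  have E0: "s + L = lam * x 0"
  proof -
    have "(\<Sum>w\<in>{w\<in>verts (T m). adj (T m) 0 w}. x w) = lam * x 0" using eq V m by auto
    moreover have "{w\<in>verts (T m). adj (T m) 0 w} = {1..<m-5}" using m by (auto simp: T_def)
    moreover have "sum x {1..<m-5} = sum x {1..<5} + L" unfolding L_def using m
      by (simp add: sum.atLeastLessThan_concat)
    moreover have "sum x {1..<5} = s" unfolding s_def by (simp add: numeral_eq_Suc)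
    ultimately show ?thesis by simp
  qed
  have Ei: "x 0 + s - x i = lam * x i" if i: "i \<in> {1..4}" for i
  proof -
    have "{w\<in>verts (T m). adj (T m) i w} = {0..4} - {i}" using m i by (auto simp: T_def)
    moreover have "sum x ({0..4} - {i}) = sum x {0..4} - x i" using i by (simp add: sum_diff1)
    moreover have "sum x {0..4} = x 0 + s" by (simp add: s_def numeral_eq_Suc)
    moreover have "(\<Sum>w\<in>{w\<in>verts (T m). adj (T m) i w}. x w) = lam * x i" using eq V m i by auto
    ultimately show ?thesis by simp
  qed
  have El: "x 0 = lam * x l" if l: "l \<in> {5..<m-5}" for l
  proof -
    have "{w\<in>verts (T m). adj (T m) l w} = {0}" using m l by (auto simp: T_def)
    moreover have "(\<Sum>w\<in>{w\<in>verts (T m). adj (T m) l w}. x w) = lam * x l" using eq V m l by auto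
    ultimately show ?thesis by simp
  qed
  have KL: "k * x 0 = lam * L"
  proof -
    have "(\<Sum>l\<in>{5..<m-5}. x 0) = (\<Sum>l\<in>{5..<m-5}. lam * x l)" using El by (rule sum.cong[OF refl])
    moreover have "(\<Sum>l\<in>{5..<m-5}. x 0) = k * x 0" using m by (simp add: k_def of_nat_diff)
    moreover have "(\<Sum>l\<in>{5..<m-5}. lam * x l) = lam * L" by (simp add: L_def sum_distrib_left)
    ultimately show ?thesis by simp
  qed
  have KS: "4 * x 0 + 3 * s = lam * s"
    using Ei[of 1] Ei[of 2] Ei[of 3] Ei[of 4] unfolding s_def by (simp add: algebra_simps)
  show False
  proof (cases "x 0 = 0")
    case True
    have "L = 0" using KL True l0 by simp
    hence s0: "s = 0" using E0 True by simp
    have xi: "x i = 0" if "i \<in> {1..4}" for i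
    proof -
      have "(lam + 1) * x i = 0" using Ei[OF that] True s0 by (simp add: algebra_simps)
      thus ?thesis using l1 by (simp add: add_eq_0_iff)
    qed
    have "x v = 0" if v: "v \<in> verts (T m)" for v
    proof -
      consider "v = 0" | "v \<in> {1..4}" | "v \<in> {5..<m-5}" using v V by force
      thus ?thesis
      proof cases
        case 1 thus ?thesis using True by simp
      next
        case 2 thus ?thesis using xi by simp
      next
        case 3 thus ?thesis using El[OF 3] True l0 by simp
      qed
    qed
    thus False using nz by blast
  next
    case False
    have "x 0 * qq k lam = lam*(lam - 3)*(lam * x 0 - s - L) + lam * (lam * s - 3*s - 4 * x 0)
        + (lam - 3) * (lam * L - k * x 0)"
      by (simp add: qq_def power2_eq_square power3_eq_cube algebra_simps)
    also have "\<dots> = 0"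
    proof -
      have a: "lam * x 0 - s - L = 0" using E0 by simp
      have b: "lam * s - 3*s - 4 * x 0 = 0" using KS by simp
      have c: "lam * L - k * x 0 = 0" using KL by simp
      show ?thesis unfolding a b c by simp
    qed
    finally show False using False lq k_def by simp
  qed
qed


lemma eig_m1:
  assumes m: "m \<ge> 10"
  shows "adj_eigenvalue (T m) (-1)"
proof -
  define x :: "nat \<Rightarrow> real" where "x = (\<lambda>v. if v = 1 then 1 else if v = 2 then -1 else 0)"
  have V: "verts (T m) = {0..<m-5}" by (simp add: T_def)
  have "\<forall>v\<in>verts (T m). (\<Sum>w\<in>{w\<in>verts (T m). adj (T m) v w}. x w) = -1 * x v"
  proof
    fix v assume v: "v \<in> verts (T m)"
    consider "v = 0" | "v \<in> {1..4}" | "v \<in> {5..<m-5}" using v V by force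
    thus "(\<Sum>w\<in>{w\<in>verts (T m). adj (T m) v w}. x w) = -1 * x v"
    proof cases
      case 1
      have "{w\<in>verts (T m). adj (T m) v w} = {1..<m-5}" using m 1 by (auto simp: T_def)
      moreover have "sum x {1..<m-5} = sum x {1..<5} + sum x {5..<m-5}" using m
        by (simp add: sum.atLeastLessThan_concat)
      moreover have "sum x {5..<m-5} = 0" by (auto simp: x_def intro!: sum.neutral)
      moreover have "sum x {1..<5} = 0" by (simp add: numeral_eq_Suc x_def)
      ultimately show ?thesis using 1 by (simp add: x_def)
    next
      case 2
      have "{w\<in>verts (T m). adj (T m) v w} = {0..4} - {v}" using m 2 by (auto simp: T_def)
      moreover have "sum x ({0..4} - {v}) = sum x {0..4} - x v" using 2 by (simp add: sum_diff1)
      moreover have "sum x {0..4} = 0" by (simp add: x_def numeral_eq_Suc)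
      ultimately show ?thesis by simp
    next
      case 3
      have "{w\<in>verts (T m). adj (T m) v w} = {0}" using m 3 by (auto simp: T_def)
      thus ?thesis using 3 by (simp add: x_def)
    qed
  qed
  moreover have "\<exists>v\<in>verts (T m). x v \<noteq> 0" using m V by (intro bexI[of _ 1]) (auto simp: x_def)
  ultimately show ?thesis unfolding adj_eigenvalue_def by blast
qed

lemma eig_root:
  assumes m: "m \<ge> 10" and r3: "r > 3" and q: "qq (real m - 10) r = 0"
  shows "adj_eigenvalue (T m) r"
proof -
  define x :: "nat \<Rightarrow> real" where "x = (\<lambda>v. if v = 0 then 1 else if v \<le> 4 then 1/(r-3) else 1/r)"
  have V: "verts (T m) = {0..<m-5}" by (simp add: T_def)
  have rr: "r - 3 \<noteq> 0" "r \<noteq> 0" using r3 by auto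
  have "\<forall>v\<in>verts (T m). (\<Sum>w\<in>{w\<in>verts (T m). adj (T m) v w}. x w) = r * x v"
  proof
    fix v assume v: "v \<in> verts (T m)"
    consider "v = 0" | "v \<in> {1..4}" | "v \<in> {5..<m-5}" using v V by force
    thus "(\<Sum>w\<in>{w\<in>verts (T m). adj (T m) v w}. x w) = r * x v"
    proof cases
      case 1
      have "{w\<in>verts (T m). adj (T m) v w} = {1..<m-5}" using m 1 by (auto simp: T_def)
      moreover have "sum x {1..<m-5} = sum x {1..<5} + sum x {5..<m-5}" using m
        by (simp add: sum.atLeastLessThan_concat)
      moreover have "sum x {5..<m-5} = (real m - 10) / r"
      proof -
        have "sum x {5..<m-5} = (\<Sum>l\<in>{5..<m-5}. 1/r)" by (rule sum.cong) (auto simp: x_def)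
        also have "\<dots> = (real m - 10) / r" using m by (simp add: of_nat_diff)
        finally show ?thesis .
      qed
      moreover have "sum x {1..<5} = 4/(r-3)" by (simp add: numeral_eq_Suc x_def)
      moreover have "4/(r-3) + (real m - 10) / r = r"
        using q rr by (simp add: qq_def field_simps power2_eq_square power3_eq_cube)
      ultimately show ?thesis using 1 m rr by (simp add: x_def of_nat_diff)
    next
      case 2
      have "{w\<in>verts (T m). adj (T m) v w} = {0..4} - {v}" using m 2 by (auto simp: T_def)
      moreover have "sum x ({0..4} - {v}) = sum x {0..4} - x v" using 2 by (simp add: sum_diff1)
      moreover have "sum x {0..4} = 1 + 4/(r-3)" by (simp add: x_def numeral_eq_Suc)
      moreover have "x v = 1/(r-3)" using 2 by (simp add: x_def)
      moreover have "1 + 4/(r-3) - 1/(r-3) = r * (1/(r-3))"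
      proof -
        have "\<And>d::real. d \<noteq> 0 \<Longrightarrow> 1 + 4/d - 1/d = (d+3) * (1/d)" by (simp add: field_simps)
        from this[OF rr(1)] show ?thesis by simp
      qed
      ultimately show ?thesis by simp
    next
      case 3
      have "{w\<in>verts (T m). adj (T m) v w} = {0}" using m 3 by (auto simp: T_def)
      thus ?thesis using 3 rr by (simp add: x_def)
    qed
  qed
  moreover have "\<exists>v\<in>verts (T m). x v \<noteq> 0" using m V by (intro bexI[of _ 0]) (auto simp: x_def)
  ultimately show ?thesis unfolding adj_eigenvalue_def by blast
qed

lemma S_finite:
  assumes m: "m \<ge> (10::nat)"
  shows "finite {\<bar>lam\<bar> | lam. adj_eigenvalue (T m) lam}"
proof -
  define k where "k = real m - 10"
  define Q where "Q = [:3*k, -(k+4), -3, 1:]"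
  have Q0: "Q \<noteq> 0" by (simp add: Q_def)
  have pq: "poly Q y = qq k y" for y by (simp add: Q_def qq_def power2_eq_square power3_eq_cube algebra_simps)
  have "{lam. adj_eigenvalue (T m) lam} \<subseteq> {0, -1} \<union> {y. poly Q y = 0}"
    using eig_roots[OF m] pq k_def by auto
  hence "finite {lam. adj_eigenvalue (T m) lam}"
    using poly_roots_finite[OF Q0] by (meson finite_Un finite.intros finite_subset)
  hence "finite (abs ` {lam. adj_eigenvalue (T m) lam})" by simp
  moreover have "{\<bar>lam\<bar> | lam. adj_eigenvalue (T m) lam} = abs ` {lam. adj_eigenvalue (T m) lam}" by auto
  ultimately show ?thesis by simp
qed

lemma R_finite: "finite {x. p_poly m x = 0}"
proof -
  define P where "P = [:real m / 2 - 1, -(real m - 2), - real m, 0, 1:]"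
  have P0: "P \<noteq> 0" by (simp add: P_def)
  have "poly P y = p_poly m y" for y
    by (simp add: P_def p_poly_def power2_eq_square power3_eq_cube power4_eq_xxxx algebra_simps)
  hence "{x. p_poly m x = 0} = {y. poly P y = 0}" by simp
  thus ?thesis using poly_roots_finite[OF P0] by simp
qed

lemma H43_free_T:
  assumes m: "m \<ge> 10"
  shows "H43_free (T m)"
proof -
  have two: "a \<le> 4" if "adj (T m) a b" "adj (T m) a c" "b \<noteq> c" for a b c
    using that by (auto simp: T_def)
  show ?thesis unfolding H43_free_def contains_subgraph_def
  proof
    assume "\<exists>f. inj_on f (verts H43) \<and> f ` verts H43 \<subseteq> verts (T m) \<and>
     (\<forall>u\<in>verts H43. \<forall>v\<in>verts H43. adj H43 u v \<longrightarrow> adj (T m) (f u) (f v))"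
    then obtain f where inj: "inj_on f {0..<6}"
      and E: "\<forall>u\<in>{0..<6}. \<forall>v\<in>{0..<6}. adj H43 u v \<longrightarrow> adj (T m) (f u) (f v)"
      by (auto simp: H43_def)
    have A: "\<And>u v. u < 6 \<Longrightarrow> v < 6 \<Longrightarrow> adj H43 u v \<Longrightarrow> adj (T m) (f u) (f v)" using E by auto
    have fne: "\<And>u v. u < 6 \<Longrightarrow> v < 6 \<Longrightarrow> u \<noteq> v \<Longrightarrow> f u \<noteq> f v"
      using inj by (auto simp: inj_on_def)
    have h: "adj H43 0 1" "adj H43 0 3" "adj H43 1 0" "adj H43 1 2" "adj H43 2 1" "adj H43 2 3"
      "adj H43 3 2" "adj H43 3 0" "adj H43 4 0" "adj H43 4 5" "adj H43 5 4" "adj H43 5 0"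
      by (auto simp: H43_def insert_commute)
    have "f v \<le> 4" if "v < 6" for v
    proof -
      have "v = 0 \<or> v = 1 \<or> v = 2 \<or> v = 3 \<or> v = 4 \<or> v = 5" using that by auto
      thus ?thesis
        using two[OF A[OF _ _ h(1)] A[OF _ _ h(2)] fne] two[OF A[OF _ _ h(3)] A[OF _ _ h(4)] fne]
          two[OF A[OF _ _ h(5)] A[OF _ _ h(6)] fne] two[OF A[OF _ _ h(7)] A[OF _ _ h(8)] fne]
          two[OF A[OF _ _ h(9)] A[OF _ _ h(10)] fne] two[OF A[OF _ _ h(11)] A[OF _ _ h(12)] fne]
        by auto
    qed
    hence "f ` {0..<6} \<subseteq> {0..4}" by auto
    hence "card (f ` {0..<6}) \<le> card {0..4::nat}" by (intro card_mono) auto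
    moreover have "card (f ` {0..<6}) = 6" using inj by (simp add: card_image)
    ultimately show False by simp
  qed
qed


lemma p_cont: "continuous_on A (p_poly m)"
  unfolding p_poly_def by (intro continuous_intros)

lemma q_cont: "continuous_on A (qq k)"
  unfolding qq_def by (intro continuous_intros)

lemma part1:
  fixes c :: real
  assumes m: "m \<ge> 10" "m \<le> 16" and c: "c > 3" "c \<le> 10"
    and p1: "c^4 + (- real m)*c^2 + (-(real m - 2))*c + (real m/2 - 1) > 0"
    and p2: "4*c^3 + 2*(- real m)*c + (-(real m - 2)) \<ge> 0"
    and p3: "6*c^2 + (- real m) \<ge> 0"
    and q1: "qq (real m - 10) c < 0"
  shows "spectral_radius (T m) > rho' m"
proof -
  have q2: "qq (real m - 10) 10 \<ge> 0" using m by (simp add: qq_def)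
  obtain r where r: "r \<ge> c" "r \<le> 10" "qq (real m - 10) r = 0"
    using IVT'[of "qq (real m - 10)" c 0 10, OF _ q2 c(2) q_cont] q1 by auto
  have ev: "adj_eigenvalue (T m) r" using eig_root[OF m(1) _ r(3)] r c by simp
  have "\<bar>r\<bar> \<in> {\<bar>lam\<bar> | lam. adj_eigenvalue (T m) lam}" using ev by blast
  hence "spectral_radius (T m) \<ge> \<bar>r\<bar>" unfolding spectral_radius_def
    using S_finite[OF m(1)] by (simp add: Max_ge)
  hence sr: "spectral_radius (T m) \<ge> c" using r c by simp
  have lt: "y < c" if "p_poly m y = 0" for y
  proof (rule ccontr)
    assume "\<not> y < c"
    hence "y^4 + (- real m)*y^2 + (-(real m - 2))*y + (real m/2 - 1) > 0"
      using quart_pos[OF _ _ p1 p2 p3] c by simp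
    thus False using that by (simp add: p_poly_def algebra_simps)
  qed
  have p0: "p_poly m 0 \<ge> 0" using m by (simp add: p_poly_def)
  have p1': "p_poly m 1 \<le> 0" using m by (simp add: p_poly_def)
  obtain y where "p_poly m y = 0"
    using IVT2'[of "p_poly m" 1 0 0, OF p1' p0 _ p_cont] by auto
  hence ne: "{x. p_poly m x = 0} \<noteq> {}" by auto
  have "rho' m \<in> {x. p_poly m x = 0}" unfolding rho'_def using Max_in[OF R_finite ne] .
  hence "rho' m < c" using lt by simp
  thus ?thesis using sr by simp
qed

lemma id_q1: "(z+1/4)^3 + (-3)*(z+1/4)^2 + (-((z^2-10)+4))*(z+1/4) + 3*(z^2-10) = 1/2*z^2 + 75/16*z - (1835/64::real)"
  by (simp add: power2_eq_square power3_eq_cube field_simps)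

lemma id_q2: "3*(z+1/4)^2 + 2*(-3)*(z+1/4) + (-((z^2-10)+4)) = 2*z^2 - 9/2*z + (75/16::real)"
  by (simp add: power2_eq_square power3_eq_cube field_simps)

lemma id_p1: "(z+1/4)^4 - z^2*(z+1/4)^2 - (z^2-2)*(z+1/4) + z^2/2 - 1 = -(z^3)/2 + 9/16*z^2 + 33/16*z - (127/256::real)"
  by (simp add: power2_eq_square power3_eq_cube power4_eq_xxxx field_simps)

lemma id_p2: "(z::real)^4 - z*z^2 - (z-2)*z + z/2 - 1 = z^2 * (z^2 - z - 1) + 5/2 * z - 1"
  by (simp add: power2_eq_square power3_eq_cube power4_eq_xxxx field_simps)

lemma part2:
  assumes m: "m \<ge> 18"
  shows "spectral_radius (T m) < rho' m"
proof -
  define s where "s = sqrt (real m)"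
  define c where "c = s + 1/4"
  define k where "k = real m - 10"
  have s0: "s \<ge> 0" by (simp add: s_def)
  have ms: "real m = s^2" by (simp add: s_def)
  have s18: "s^2 \<ge> 18" using m ms by simp
  have s4: "s \<ge> (424/100)"
  proof (rule ccontr)
    assume "\<not> s \<ge> (424/100)"
    hence "s * s \<le> (424/100) * (424/100)" using s0 by (intro mult_mono) auto
    thus False using s18 by (simp add: power2_eq_square)
  qed
  have ss: "s^2 \<ge> 4 * s" using s4 s0 by (simp add: power2_eq_square mult_right_mono)
  have ks: "k = s^2 - 10" using ms k_def by simp
  have qform: "qq k x = x^3 + (-3)*x^2 + (-(k+4))*x + 3*k" for x by (simp add: qq_def algebra_simps)
  have qc: "c^3 + (-3)*c^2 + (-(k+4))*c + 3*k = 1/2*s^2 + 75/16*s - 1835/64"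
    unfolding ks c_def by (rule id_q1)
  have qc': "3*c^2 + 2*(-3)*c + (-(k+4)) = 2*s^2 - 9/2*s + 75/16"
    unfolding ks c_def by (rule id_q2)
  have eigb: "\<bar>lam\<bar> < c" if ev: "adj_eigenvalue (T m) lam" for lam
  proof -
    have c4: "c > 4" using s4 c_def by simp
    consider "lam = 0" | "lam = -1" | "qq k lam = 0" using eig_roots[OF _ ev] m k_def by force
    thus ?thesis
    proof cases
      case 1 thus ?thesis using c4 by simp
    next
      case 2 thus ?thesis using c4 by simp
    next
      case 3
      have up: "lam < c"
      proof (rule ccontr)
        assume "\<not> lam < c"
        hence cl: "c \<le> lam" by simp
        have h1: "c^3 + (-3)*c^2 + (-(k+4))*c + 3*k > 0" unfolding qc using s4 s18 by linarith
        have h2: "3*c^2 + 2*(-3)*c + (-(k+4)) \<ge> 0" unfolding qc' using s4 ss by linarith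
        have h3: "3*c + (-3) \<ge> 0" using s4 c_def by linarith
        have "lam^3 + (-3)*lam^2 + (-(k+4))*lam + 3*k > 0"
          using cubic_pos[OF cl h1 h2 h3] .
        thus False using 3 qform by simp
      qed
      have lo: "lam > -s"
      proof (rule ccontr)
        assume "\<not> lam > -s"
        define y where "y = - lam"
        have y: "y \<ge> s" using \<open>\<not> lam > -s\<close> y_def by simp
        have yy: "y^2 \<ge> s^2" using y s0 by (simp add: power_mono)
        have "qq k lam = -y*(y^2 - s^2) - 3*y^2 - 6*y + 3*s^2 - 30"
          unfolding y_def ks qq_def by (simp add: power2_eq_square power3_eq_cube algebra_simps)
        moreover have "y*(y^2 - s^2) \<ge> 0" using y s0 yy by simp
        ultimately have "qq k lam < 0" using yy y s0 by linarith
        thus False using 3 by simp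
      qed
      show ?thesis using up lo c_def by simp
    qed
  qed
  have Sfin: "finite {\<bar>lam\<bar> | lam. adj_eigenvalue (T m) lam}" using S_finite m by simp
  have Sne: "{\<bar>lam\<bar> | lam. adj_eigenvalue (T m) lam} \<noteq> {}" using eig_m1[of m] m by auto
  have "spectral_radius (T m) \<in> {\<bar>lam\<bar> | lam. adj_eigenvalue (T m) lam}"
    unfolding spectral_radius_def by (rule Max_in[OF Sfin Sne])
  hence sr: "spectral_radius (T m) < c" using eigb by auto
  have pc: "p_poly m c = -(s^3)/2 + 9/16*s^2 + 33/16*s - 127/256"
  proof -
    have e1: "p_poly m c = c^4 - s^2*c^2 - (s^2-2)*c + s^2/2 - 1" by (simp add: p_poly_def ms)
    show ?thesis unfolding e1 unfolding c_def by (rule id_p1)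
  qed
  have "s^2 * 4 \<le> s^2 * s" using s4 by (intro mult_left_mono) auto
  moreover have "s^3 = s^2 * s" by (simp add: power2_eq_square power3_eq_cube)
  ultimately have "s^3 \<ge> 4 * s^2" by simp
  hence pcn: "p_poly m c \<le> 0" unfolding pc using ss s4 by linarith
  define M where "M = real m"
  have M18: "M \<ge> 18" using m M_def by simp
  have "M^2 \<ge> 18 * M" using M18 by (simp add: power2_eq_square)
  hence "M^2 - M - 1 \<ge> 0" using M18 by linarith
  hence "M^2 * (M^2 - M - 1) \<ge> 0" by simp
  moreover have "p_poly m M = M^2 * (M^2 - M - 1) + 5/2 * M - 1"
  proof -
    have e1: "p_poly m M = M^4 - M*M^2 - (M-2)*M + M/2 - 1" by (simp add: p_poly_def M_def)
    show ?thesis unfolding e1 by (rule id_p2)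
  qed
  ultimately have pM: "p_poly m M \<ge> 0" using M18 by linarith
  have cM: "c \<le> M"
  proof -
    have "s + 1/4 \<le> s^2" using ss s4 by linarith
    thus ?thesis using ms M_def c_def by simp
  qed
  obtain y where y: "y \<ge> c" "p_poly m y = 0"
    using IVT'[of "p_poly m" c 0 M, OF pcn pM cM p_cont] by auto
  have "y \<le> rho' m" unfolding rho'_def using y R_finite by (simp add: Max_ge)
  thus ?thesis using sr y by simp
qed

theorem proposition1p2:
  fixes m :: nat
  assumes "even m" and "m \<ge> 10"
  shows "H43_free (T m)
    \<and> (m \<in> {10, 12, 14, 16} \<longrightarrow> spectral_radius (T m) > rho' m)
    \<and> (m \<ge> 18 \<longrightarrow> spectral_radius (T m) < rho' m)"
proof (intro conjI impI)
  show "H43_free (T m)" using H43_free_T assms by simp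
next
  assume "m \<in> {10, 12, 14, 16}"
  then consider "m = 10" | "m = 12" | "m = 14" | "m = 16" by auto
  thus "spectral_radius (T m) > rho' m"
  proof cases
    case 1 show ?thesis unfolding 1 by (rule part1[of _ "37/10"]) (simp_all add: qq_def power2_eq_square power3_eq_cube power4_eq_xxxx)
  next
    case 2 show ?thesis unfolding 2 by (rule part1[of _ "39/10"]) (simp_all add: qq_def power2_eq_square power3_eq_cube power4_eq_xxxx)
  next
    case 3 show ?thesis unfolding 3 by (rule part1[of _ "415/100"]) (simp_all add: qq_def power2_eq_square power3_eq_cube power4_eq_xxxx)
  next
    case 4 show ?thesis unfolding 4 by (rule part1[of _ "869/200"]) (simp_all add: qq_def power2_eq_square power3_eq_cube power4_eq_xxxx)
  qed
next
  assume "m \<ge> 18"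
  thus "spectral_radius (T m) < rho' m" by (rule part2)
qed

end
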